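(* Let $d\ge1$, let $n$ be divisible by 4 and sufficiently large with $d=o(\sqrt{n})$. Let $\nu$ be the prefix of length $\frac{n}{4}$ of the infinite binary string $1^1 0^1 1^2 0^2 1^3 0^3\cdots$. Let $x$ be a binary string of length $\frac{n}{4}$ with exactly $d$ ones and $y$ a binary string of length $\frac{n}{4}$ with $\mathsf{HAM}(x,y)=d+1$, and set $s(x,y)=\nu^R\, x\, y^R\, \nu$. Then every substring of $s(x,y)$ that is a $d$-near-palindrome has length at most $200d^2+\frac{n}{2}$.
   Context: $1^k$ and $0^k$ denote $k$ repetitions of the symbol; juxtaposition denotes concatenation; $T^R$ denotes the reverse of $T$. $\mathsf{HAM}(x,y)$ is the number of positions where equal-length strings differ. A string $T$ of length $m$ is a $d$-near-palindrome if $|\{i\in[m]: T[i]\neq T[m+1-i]\}|\le d$. *)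

theory Defs
  imports Complex_Main "HOL-Library.Landau_Symbols" "HOL-Library.Sublist"
begin

(* Binary strings are lists of bool; True = 1, False = 0. Positions are 0-indexed. *)

definition HAM :: "bool list \<Rightarrow> bool list \<Rightarrow> nat" where
  "HAM x y = card {i. i < length x \<and> x ! i \<noteq> y ! i}"

definition near_pal :: "nat \<Rightarrow> bool list \<Rightarrow> bool" where
  "near_pal d T \<longleftrightarrow> card {i. i < length T \<and> T ! i \<noteq> T ! (length T - 1 - i)} \<le> d"

(* prefix of length m of the infinite string 1^1 0^1 1^2 0^2 1^3 0^3 ...;
   blocks 1..m have total length m(m+1) \<ge> m, so this is the true prefix *)
definition nu_prefix :: "nat \<Rightarrow> bool list" where
  "nu_prefix m = take m (concat (map (\<lambda>k. replicate k True @ replicate k False) [1..<m+1]))"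

definition s_str :: "nat \<Rightarrow> bool list \<Rightarrow> bool list \<Rightarrow> bool list" where
  "s_str n x y = rev (nu_prefix (n div 4)) @ x @ rev y @ nu_prefix (n div 4)"

end

theory Submission
  imports Defs
begin


definition nuf :: "nat \<Rightarrow> bool" where
  "nuf j \<longleftrightarrow> (\<exists>k. k*k - k \<le> j \<and> j < k*k)"

definition blks :: "nat \<Rightarrow> bool list" where
  "blks N = concat (map (\<lambda>k. replicate k True @ replicate k False) [1..<N+1])"

lemma blks_Suc: "blks (Suc N) = blks N @ (replicate (Suc N) True @ replicate (Suc N) False)"
  by (simp add: blks_def)

lemma len_blks: "length (blks N) = N * (N+1)"
  by (induction N) (auto simp: blks_Suc, simp add: blks_def)

lemma zero_block: "k*k \<le> j \<Longrightarrow> j < k*k + k \<Longrightarrow> \<not> nuf j"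
proof
  assume a: "k*k \<le> j" "j < k*k + k" "nuf j"
  then obtain k' where k': "k'*k' - k' \<le> j" "j < k'*k'" by (auto simp: nuf_def)
  show False
  proof (cases "k' \<le> k")
    case True
    then have "k'*k' \<le> k*k" by (simp add: mult_le_mono)
    then show False using a k' by linarith
  next
    case False
    then have "Suc k \<le> k'" by simp
    then have "Suc k * k \<le> k' * (k' - 1)" by (intro mult_le_mono) auto
    moreover have "k' * (k' - 1) = k'*k' - k'" by (simp add: algebra_simps diff_mult_distrib2)
    ultimately show False using a k' by simp
  qed
qed

lemma one_block: "k*k - k \<le> j \<Longrightarrow> j < k*k \<Longrightarrow> nuf j"
  by (auto simp: nuf_def)

lemma nth_blks: "j < N*(N+1) \<Longrightarrow> blks N ! j = nuf j"
proof (induction N arbitrary: j)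
  case 0 then show ?case by simp
next
  case (Suc N)
  show ?case
  proof (cases "j < N*(N+1)")
    case True then show ?thesis using Suc by (simp add: blks_Suc nth_append len_blks)
  next
    case False
    note F = False
    show ?thesis
    proof (cases "j < N*(N+1) + Suc N")
      case True
      have "blks (Suc N) ! j = True" using F True by (simp add: blks_Suc nth_append len_blks del: replicate_Suc replicate.simps)
      moreover have "nuf j"
        by (rule one_block[of "Suc N"]) (use F True in \<open>auto simp: algebra_simps\<close>)
      ultimately show ?thesis by simp
    next
      case False
      have "blks (Suc N) ! j = False" using F False Suc.prems by (simp add: blks_Suc nth_append len_blks del: replicate_Suc replicate.simps)
      moreover have "\<not> nuf j"
        by (rule zero_block[of "Suc N"]) (use F False Suc.prems in \<open>auto simp: algebra_simps\<close>)
      ultimately show ?thesis by simp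
    qed
  qed
qed

lemma nu_blks: "nu_prefix m = take m (blks m)"
  by (simp add: nu_prefix_def blks_def)

lemma len_nu: "length (nu_prefix m) = m"
proof -
  have "m \<le> m * (m+1)" by simp
  then show ?thesis unfolding nu_blks using len_blks[of m] by simp
qed

lemma nth_nu: "j < m \<Longrightarrow> nu_prefix m ! j = nuf j"
proof -
  assume "j < m"
  moreover have "m \<le> m * (m+1)" by simp
  ultimately show ?thesis unfolding nu_blks by (simp add: nth_blks)
qed

lemma cover: "\<exists>k. k*k - k \<le> (j::nat) \<and> j < k*k + k"
proof -
  let ?k = "LEAST k. j < k*k + k"
  have ex: "j < (j+1)*(j+1) + (j+1)" by simp
  have h1: "j < ?k*?k + ?k" by (rule LeastI[of _ "j+1"]) (rule ex)
  have "?k \<noteq> 0" using h1 by (intro notI) simp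
  then obtain k0 where k0: "?k = Suc k0" by (cases ?k) auto
  have "\<not> j < k0*k0 + k0" using k0 not_less_Least[of k0 "\<lambda>k. j < k*k + k"] by simp
  then have "?k*?k - ?k \<le> j" using k0 by (simp add: algebra_simps)
  then show ?thesis using h1 by blast
qed

lemma L1:
  assumes "1 \<le> k" "w < k*k"
  shows "\<exists>i. w \<le> i \<and> i < w + k \<and> nuf i"
proof (cases "k*k < w + k")
  case True
  have "k*k - k \<le> k*k - 1" "k*k - 1 < k*k" using assms by auto
  then have "nuf (k*k - 1)" by (rule one_block)
  then show ?thesis using assms True by (intro exI[of _ "k*k - 1"]) auto
next
  case False
  define i0 where "i0 = w + k - 1"
  obtain k' where k': "k'*k' - k' \<le> i0" "i0 < k'*k' + k'" using cover by blast
  show ?thesis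
  proof (cases "nuf i0")
    case True then show ?thesis using assms by (intro exI[of _ i0]) (auto simp: i0_def)
  next
    case nf: False
    have "k'*k' \<le> i0" using nf k' one_block[of k' i0] by linarith
    have "k' < k"
    proof (rule ccontr)
      assume "\<not> k' < k"
      then have "k*k \<le> k'*k'" by (simp add: mult_le_mono)
      then show False using \<open>k'*k' \<le> i0\<close> False assms unfolding i0_def by linarith
    qed
    have "k' \<noteq> 0" using k' by (intro notI) simp
    have "w < k'*k'" using k' \<open>k' < k\<close> assms unfolding i0_def by linarith
    show ?thesis
      apply (rule exI[of _ "k'*k' - 1"])
      using \<open>w < k'*k'\<close> \<open>k'*k' \<le> i0\<close> \<open>k' \<noteq> 0\<close> assms unfolding i0_def
      by (auto intro!: one_block[of k'])
  qed
qed



lemma sq_inj: "(k1::nat)*k1 = k2*k2 \<Longrightarrow> k1 = k2"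
  by (metis power2_eq_square power2_eq_imp_eq zero_le)

lemma sq_gap: "(k1::nat) < k2 \<Longrightarrow> k1*k1 + k1 < k2*k2"
proof -
  assume "k1 < k2"
  then have "Suc k1 * Suc k1 \<le> k2 * k2" by (intro mult_le_mono) auto
  then show ?thesis by simp
qed

lemma G:
  fixes f :: "nat \<Rightarrow> bool" and m d a e :: nat
  assumes HA: "\<forall>p<m. f p = nuf (m-1-p)"
    and HD: "\<forall>j<m. f (3*m+j) = nuf j"
    and HZ: "card {p. m \<le> p \<and> p < 3*m \<and> f p} \<le> 3*d+1"
    and he: "e < 4*m" and hL: "a + 2*m + 200*(d*d) \<le> e" and hS: "4*m \<le> a+e" and hd: "1 \<le> d"
  shows "d+1 \<le> card {q. a \<le> q \<and> q \<le> e \<and> f q \<noteq> f (a+e-q)}"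
proof -
  define M where "M = {q. a \<le> q \<and> q \<le> e \<and> f q \<noteq> f (a+e-q)}"
  have finM: "finite M" unfolding M_def by (rule finite_subset[of _ "{..e}"]) auto
  define \<delta> where "\<delta> = a + e + 1 - 4*m"
  have d1: "1 \<le> \<delta>" "\<delta> \<le> a" using hS he unfolding \<delta>_def by auto
  have J: "3*m + 100*(d*d) \<le> e" using hL hS by linarith
  have dd1: "d \<le> d*d" using hd by simp
  define t where "t = (4*d+2)*(4*d+2)"
  have "t = 16*(d*d) + 16*d + 4" unfolding t_def by (simp add: algebra_simps)
  then have t36: "t \<le> 36*(d*d)" using dd1 hd by linarith
  show ?thesis
  proof (cases "t \<le> \<delta>")
    case True
    define Os where "Os = (\<lambda>k. k*k - 1) ` {1..4*d+2}"
    have injO: "inj_on (\<lambda>k. k*k - 1) {1..4*d+2}"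
    proof (rule inj_onI)
      fix k1 k2 assume "k1 \<in> {1..4*d+2}" "k2 \<in> {1..4*d+2}" "k1*k1 - 1 = k2*k2 - (1::nat)"
      moreover have "1 \<le> k1*k1" "1 \<le> k2*k2" using calculation by auto
      ultimately have "k1*k1 = k2*k2" by linarith
      then show "k1 = k2" by (rule sq_inj)
    qed
    have cardO: "card Os = 4*d+2" unfolding Os_def using card_image[OF injO] by simp
    have Oprop: "j < t \<and> nuf j" if jO: "j \<in> Os" for j
    proof -
      obtain k where k: "k \<in> {1..4*d+2}" "j = k*k - 1" using jO unfolding Os_def by blast
      have "k*k \<le> t" unfolding t_def using k by (intro mult_le_mono) auto
      moreover have "1 \<le> k*k" using k by auto
      moreover have "nuf j" using k \<open>1 \<le> k*k\<close> by (intro one_block[of k]) auto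
      moreover have "j < t" using k(2) \<open>k*k \<le> t\<close> \<open>1 \<le> k*k\<close> by linarith
      ultimately show ?thesis by auto
    qed
    define Ob where "Ob = {j \<in> Os. f (a + e - 3*m - j)}"
    have "(\<lambda>j. a + e - 3*m - j) ` Ob \<subseteq> {p. m \<le> p \<and> p < 3*m \<and> f p}"
    proof
      fix p assume "p \<in> (\<lambda>j. a + e - 3*m - j) ` Ob"
      then obtain j where j: "j \<in> Os" "f (a+e-3*m-j)" "p = a+e-3*m-j" unfolding Ob_def by auto
      have "j < \<delta>" using Oprop[OF j(1)] True by simp
      then show "p \<in> {p. m \<le> p \<and> p < 3*m \<and> f p}" using j d1 hL he unfolding \<delta>_def by auto
    qed
    moreover have "inj_on (\<lambda>j. a + e - 3*m - j) Ob"
    proof (rule inj_onI)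
      fix j1 j2 assume "j1 \<in> Ob" "j2 \<in> Ob" "a + e - 3*m - j1 = a + e - 3*m - j2"
      moreover have "j1 < \<delta>" "j2 < \<delta>" using calculation Oprop True unfolding Ob_def by fastforce+
      ultimately show "j1 = j2" unfolding \<delta>_def by linarith
    qed
    ultimately have "card Ob \<le> 3*d+1"
      using HZ card_mono[of "{p. m \<le> p \<and> p < 3*m \<and> f p}"] card_image
      by (metis (no_types, lifting) finite_nat_set_iff_bounded mem_Collect_eq order_trans)
    have finO: "finite Os" unfolding Os_def by simp
    have "Ob \<subseteq> Os" unfolding Ob_def by auto
    have cG: "d+1 \<le> card (Os - Ob)"
      using card_Diff_subset[OF finite_subset[OF \<open>Ob \<subseteq> Os\<close> finO] \<open>Ob \<subseteq> Os\<close>] cardO \<open>card Ob \<le> 3*d+1\<close>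
        card_mono[OF finO \<open>Ob \<subseteq> Os\<close>] by linarith
    have sub: "(\<lambda>j. 3*m + j) ` (Os - Ob) \<subseteq> M"
    proof
      fix q assume "q \<in> (\<lambda>j. 3*m + j) ` (Os - Ob)"
      then obtain j where j: "j \<in> Os" "j \<notin> Ob" "q = 3*m+j" by auto
      have jt: "j < t" "nuf j" using Oprop[OF j(1)] by auto
      have "j < \<delta>" using jt True by simp
      have jm: "j < m" using jt t36 J he by linarith
      have "f q" using HD jm jt j by simp
      moreover have "\<not> f (a+e-q)" using j unfolding Ob_def by (simp add: diff_diff_add)
      moreover have "a \<le> q" using j jt t36 J hL he by linarith
      moreover have "q \<le> e" using j jt t36 J hL by linarith
      ultimately show "q \<in> M" unfolding M_def by auto
    qed
    have "card ((\<lambda>j. 3*m + j) ` (Os - Ob)) = card (Os - Ob)" by (rule card_image) (simp add: inj_on_def)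
    then show ?thesis using card_mono[OF finM sub] cG unfolding M_def by linarith
  next
    case False
    define K where "K = {6*d..9*d}"
    have ex: "\<exists>j. k*k \<le> j \<and> j < k*k + k \<and> 3*m + j \<in> M" if kK: "k \<in> K" for k
    proof -
      have k6: "6*d \<le> k" "k \<le> 9*d" using kK K_def by auto
      have "36*(d*d) \<le> k*k" using mult_le_mono[OF k6(1) k6(1)] by simp
      have "k*k \<le> 81*(d*d)" using mult_le_mono[OF k6(2) k6(2)] by simp
      have "\<delta> \<le> k*k" using False t36 \<open>36*(d*d) \<le> k*k\<close> by linarith
      have "1 \<le> k" using k6 hd by linarith
      have "k*k - \<delta> < k*k" using d1 \<open>\<delta> \<le> k*k\<close> by linarith
      from L1[OF \<open>1 \<le> k\<close> this] obtain i where i: "k*k - \<delta> \<le> i" "i < k*k - \<delta> + k" "nuf i"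
        by blast
      define j where "j = i + \<delta>"
      have j1: "k*k \<le> j" "j < k*k + k" using i \<open>\<delta> \<le> k*k\<close> unfolding j_def by auto
      have "\<not> nuf j" by (rule zero_block[OF j1])
      have "k \<le> 9*(d*d)" using k6 dd1 by linarith
      have jJ: "j + 3*m \<le> e" using j1 \<open>k*k \<le> 81*(d*d)\<close> \<open>k \<le> 9*(d*d)\<close> J by linarith
      have jm: "j < m" using jJ he by linarith
      have "\<not> f (3*m+j)" using HD jm \<open>\<not> nuf j\<close> by simp
      moreover have "a + e - (3*m+j) = m - 1 - i" using d1 unfolding j_def \<delta>_def by linarith
      moreover have "f (m - 1 - i)" using HA i jm unfolding j_def by simp
      moreover have "a \<le> 3*m + j" using hL he by linarith
      ultimately have "3*m + j \<in> M" using jJ unfolding M_def by auto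
      then show ?thesis using j1 by blast
    qed
    define g where "g k = (SOME j. k*k \<le> j \<and> j < k*k + k \<and> 3*m + j \<in> M)" for k
    have gp: "k*k \<le> g k \<and> g k < k*k + k \<and> 3*m + g k \<in> M" if "k \<in> K" for k
      unfolding g_def by (rule someI_ex[OF ex[OF that]])
    have inj: "inj_on (\<lambda>k. 3*m + g k) K"
    proof (rule inj_onI)
      fix k1 k2 assume a1: "k1 \<in> K" "k2 \<in> K" "3*m + g k1 = 3*m + g k2"
      show "k1 = k2"
      proof (rule linorder_cases[of k1 k2])
        assume "k1 < k2" then show ?thesis using sq_gap[of k1 k2] gp[OF a1(1)] gp[OF a1(2)] a1(3) by linarith
      next
        assume "k2 < k1" then show ?thesis using sq_gap[of k2 k1] gp[OF a1(1)] gp[OF a1(2)] a1(3) by linarith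
      qed
    qed
    have sub: "(\<lambda>k. 3*m + g k) ` K \<subseteq> M" using gp by auto
    have "card K = 3*d+1" unfolding K_def by simp
    then show ?thesis using card_mono[OF finM sub] card_image[OF inj] unfolding M_def by linarith
  qed
qed



lemma Grev:
  fixes f :: "nat \<Rightarrow> bool" and m d a e :: nat
  assumes HA: "\<forall>p<m. f p = nuf (m-1-p)"
    and HD: "\<forall>j<m. f (3*m+j) = nuf j"
    and HZ: "card {p. m \<le> p \<and> p < 3*m \<and> f p} \<le> 3*d+1"
    and he: "e < 4*m" and hL: "a + 2*m + 200*(d*d) \<le> e" and hS: "a+e+2 \<le> 4*m" and hd: "1 \<le> d"
  shows "d+1 \<le> card {q. a \<le> q \<and> q \<le> e \<and> f q \<noteq> f (a+e-q)}"
proof -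
  define g where "g p = f (4*m-1-p)" for p
  define a' where "a' = 4*m-1-e"
  define e' where "e' = 4*m-1-a"
  have HAg: "\<forall>p<m. g p = nuf (m-1-p)"
  proof (intro allI impI)
    fix p assume "p < m"
    then have "4*m-1-p = 3*m + (m-1-p)" by linarith
    moreover have "m-1-p < m" using \<open>p<m\<close> by linarith
    ultimately show "g p = nuf (m-1-p)" using HD unfolding g_def by (simp only:)
  qed
  have HDg: "\<forall>j<m. g (3*m+j) = nuf j"
  proof (intro allI impI)
    fix j assume "j < m"
    then have "4*m-1-(3*m+j) = m-1-j" "m-1-(m-1-j) = j" by linarith+
    moreover have "m-1-j < m" using \<open>j<m\<close> by linarith
    ultimately show "g (3*m+j) = nuf j" using HA unfolding g_def by (simp only:)
  qed
  have fin: "finite {p. m \<le> p \<and> p < 3*m \<and> f p}" by (rule finite_subset[of _ "{..<3*m}"]) auto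
  have "{p. m \<le> p \<and> p < 3*m \<and> g p} \<subseteq> (\<lambda>p. 4*m-1-p) ` {p. m \<le> p \<and> p < 3*m \<and> f p}"
  proof
    fix p assume p: "p \<in> {p. m \<le> p \<and> p < 3*m \<and> g p}"
    then have "p = 4*m-1-(4*m-1-p)" "m \<le> 4*m-1-p" "4*m-1-p < 3*m" by auto
    then show "p \<in> (\<lambda>p. 4*m-1-p) ` {p. m \<le> p \<and> p < 3*m \<and> f p}" using p unfolding g_def by blast
  qed
  then have "card {p. m \<le> p \<and> p < 3*m \<and> g p} \<le> card ((\<lambda>p. 4*m-1-p) ` {p. m \<le> p \<and> p < 3*m \<and> f p})"
    by (rule card_mono[OF finite_imageI[OF fin]])
  then have HZg: "card {p. m \<le> p \<and> p < 3*m \<and> g p} \<le> 3*d+1"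
    using card_image_le[OF fin, of "\<lambda>p. 4*m-1-p"] HZ by linarith
  have "d+1 \<le> card {q. a' \<le> q \<and> q \<le> e' \<and> g q \<noteq> g (a'+e'-q)}"
    by (rule G[OF HAg HDg HZg]) (use he hL hS hd in \<open>auto simp: a'_def e'_def\<close>)
  moreover have "(\<lambda>q. 4*m-1-q) ` {q. a' \<le> q \<and> q \<le> e' \<and> g q \<noteq> g (a'+e'-q)}
      \<subseteq> {q. a \<le> q \<and> q \<le> e \<and> f q \<noteq> f (a+e-q)}"
  proof
    fix r assume "r \<in> (\<lambda>q. 4*m-1-q) ` {q. a' \<le> q \<and> q \<le> e' \<and> g q \<noteq> g (a'+e'-q)}"
    then obtain q where q: "a' \<le> q" "q \<le> e'" "g q \<noteq> g (a'+e'-q)" "r = 4*m-1-q" by auto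
    have s1: "a' + e + 1 = 4*m" unfolding a'_def using he by linarith
    have s2: "e' + a + 1 = 4*m" unfolding e'_def using he hL by linarith
    have s3: "r + q + 1 = 4*m" using q(4) q(2) s2 by linarith
    have "4*m-1-(a'+e'-q) = a+e-r" using s1 s2 s3 q(1) q(2) by linarith
    moreover have "a \<le> r" using s1 s2 s3 q(2) by linarith
    moreover have "r \<le> e" using s1 s2 s3 q(1) by linarith
    moreover have "g q = f r" unfolding g_def q(4) ..
    moreover have "g (a'+e'-q) = f (4*m-1-(a'+e'-q))" unfolding g_def ..
    ultimately show "r \<in> {q. a \<le> q \<and> q \<le> e \<and> f q \<noteq> f (a+e-q)}" using q(3) by simp
  qed
  moreover have "inj_on (\<lambda>q. 4*m-1-q) {q. a' \<le> q \<and> q \<le> e' \<and> g q \<noteq> g (a'+e'-q)}"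
    by (rule inj_onI) (use he in \<open>auto simp: e'_def\<close>)
  moreover have "finite {q. a \<le> q \<and> q \<le> e \<and> f q \<noteq> f (a+e-q)}" by (rule finite_subset[of _ "{..e}"]) auto
  ultimately show ?thesis using card_image[of "\<lambda>q. 4*m-1-q"] card_mono by (metis (no_types, lifting) order_trans)
qed



lemma fixed_n:
  fixes dn n :: nat and x y T :: "bool list"
  assumes hd: "1 \<le> dn" and n4: "4 dvd n"
    and lx: "length x = n div 4" and ly: "length y = n div 4"
    and cx: "count_list x True = dn" and hxy: "HAM x y = dn + 1"
    and sub: "sublist T (s_str n x y)" and np: "near_pal dn T"
  shows "length T \<le> 200 * dn^2 + n div 2"
proof (rule ccontr)
  assume long: "\<not> length T \<le> 200 * dn^2 + n div 2"
  define m where "m = n div 4"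
  have n: "n = 4*m" "n div 2 = 2*m" using n4 unfolding m_def by auto
  define s where "s = s_str n x y"
  have s_eq: "s = rev (nu_prefix m) @ (x @ (rev y @ nu_prefix m))" unfolding s_def s_str_def m_def by simp
  have ls: "length s = 4*m" using s_eq lx ly len_nu[of m] unfolding m_def by simp
  obtain ps ss where pss: "s = ps @ T @ ss" using sub unfolding sublist_def s_def by blast
  define a where "a = length ps"
  define L where "L = length T"
  define e where "e = a + L - 1"
  have LL: "2*m + 200*(dn*dn) < L" using long n unfolding L_def by (simp add: power2_eq_square)
  have he: "e < 4*m" using ls pss LL unfolding e_def a_def L_def by simp
  have hL: "a + 2*m + 200*(dn*dn) \<le> e" using LL unfolding e_def by linarith
  have lxm: "length x = m" and lym: "length y = m" using lx ly unfolding m_def by auto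
  define f where "f = (\<lambda>p. s ! p)"
  have HA: "\<forall>p<m. f p = nuf (m-1-p)"
  proof (intro allI impI)
    fix p assume "p < m"
    then have "f p = nu_prefix m ! (m-1-p)" unfolding f_def s_eq by (simp add: nth_append len_nu rev_nth)
    then show "f p = nuf (m-1-p)" using nth_nu[of "m-1-p" m] \<open>p<m\<close> by simp
  qed
  have HD: "\<forall>j<m. f (3*m+j) = nuf j"
  proof (intro allI impI)
    fix j assume "j < m"
    then have "f (3*m+j) = nu_prefix m ! j" unfolding f_def s_eq using lxm lym
      by (simp add: nth_append len_nu)
    then show "f (3*m+j) = nuf j" using nth_nu[of j m] \<open>j<m\<close> by simp
  qed
  define X where "X = {i. i < m \<and> x ! i}"
  define Y where "Y = {i. i < m \<and> y ! i}"
  define H where "H = {i. i < m \<and> x ! i \<noteq> y ! i}"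
  have cX: "card X = dn"
    using cx lx unfolding X_def m_def count_list_eq_length_filter length_filter_conv_card
    by simp
  have cH: "card H = dn + 1" using hxy lx unfolding H_def HAM_def m_def by simp
  have "Y \<subseteq> X \<union> H" unfolding X_def Y_def H_def by auto
  moreover have "finite (X \<union> H)" unfolding X_def H_def by simp
  ultimately have "card Y \<le> card (X \<union> H)" by (rule card_mono[rotated])
  then have "card Y \<le> card X + card H" using card_Un_le[of X H] by linarith
  then have cY: "card Y \<le> 2*dn+1" using cX cH by linarith
  have Zsub: "{p. m \<le> p \<and> p < 3*m \<and> f p} \<subseteq> (\<lambda>i. m+i) ` X \<union> (\<lambda>i. 3*m-1-i) ` Y"
  proof
    fix p assume p0: "p \<in> {p. m \<le> p \<and> p < 3*m \<and> f p}"
    then have p: "m \<le> p" "p < 3*m" "f p" by auto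
    show "p \<in> (\<lambda>i. m+i) ` X \<union> (\<lambda>i. 3*m-1-i) ` Y"
    proof (cases "p < 2*m")
      case True
      have "p - m < m" using True by linarith
      have "f p = x ! (p - m)" using p(1) True lxm lym \<open>p - m < m\<close> unfolding f_def s_eq by (simp add: nth_append len_nu)
      then have "p - m \<in> X" using p True unfolding X_def by auto
      moreover have "p = m + (p - m)" using p by auto
      ultimately show ?thesis by blast
    next
      case False
      have "\<not> p - m < m" "p - m - m < m" using False p(2) by linarith+
      have "f p = rev y ! (p - 2*m)" using p(2) False lxm lym \<open>\<not> p - m < m\<close> \<open>p - m - m < m\<close> unfolding f_def s_eq by (simp add: nth_append len_nu mult_2)
      also have "\<dots> = y ! (3*m-1-p)" using p(2) False lym by (simp add: rev_nth)
      finally have "3*m-1-p \<in> Y" using p False unfolding Y_def by auto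
      moreover have "p = 3*m-1-(3*m-1-p)" using p by auto
      ultimately show ?thesis by blast
    qed
  qed
  have "card {p. m \<le> p \<and> p < 3*m \<and> f p} \<le> card ((\<lambda>i. m+i) ` X \<union> (\<lambda>i. 3*m-1-i) ` Y)"
    by (rule card_mono[OF _ Zsub]) (simp add: X_def Y_def)
  also have "\<dots> \<le> card ((\<lambda>i. m+i) ` X) + card ((\<lambda>i. 3*m-1-i) ` Y)" by (rule card_Un_le)
  also have "\<dots> \<le> card X + card Y"
    by (intro add_mono card_image_le) (simp_all add: X_def Y_def)
  finally have HZ: "card {p. m \<le> p \<and> p < 3*m \<and> f p} \<le> 3*dn+1" using cX cY by linarith
  define MF where "MF = {q. a \<le> q \<and> q \<le> e \<and> f q \<noteq> f (a+e-q)}"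
  define I where "I = {i. i < L \<and> T ! i \<noteq> T ! (L - 1 - i)}"
  have cI: "card I \<le> dn" using np unfolding near_pal_def I_def L_def .
  have Tnth: "T ! i = f (a + i)" if "i < L" for i
    using that unfolding f_def pss a_def L_def by (simp add: nth_append)
  have "MF \<subseteq> (\<lambda>i. a + i) ` I"
  proof
    fix q assume q: "q \<in> MF"
    then have q1: "a \<le> q" "q \<le> e" "f q \<noteq> f (a+e-q)" unfolding MF_def by auto
    have "q - a < L" using q1 LL unfolding e_def by linarith
    moreover have "L - 1 - (q - a) < L" using LL by linarith
    moreover have "a + (L - 1 - (q-a)) = a+e-q" using q1 LL unfolding e_def by linarith
    ultimately have "q - a \<in> I" using Tnth q1 unfolding I_def by auto
    then show "q \<in> (\<lambda>i. a + i) ` I" using q1 by (intro image_eqI[of _ _ "q-a"]) auto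
  qed
  moreover have finI: "finite I" unfolding I_def by simp
  ultimately have "card MF \<le> card ((\<lambda>i. a + i) ` I)" by (intro card_mono) auto
  then have cMF: "card MF \<le> dn" using card_image_le[OF finI, of "\<lambda>i. a+i"] cI by linarith
  have "dn + 1 \<le> card MF"
  proof (cases "4*m \<le> a+e")
    case True
    show ?thesis unfolding MF_def by (rule G[OF HA HD HZ he hL True hd])
  next
    case F: False
    show ?thesis
    proof (cases "a+e+2 \<le> 4*m")
      case True
      show ?thesis unfolding MF_def by (rule Grev[OF HA HD HZ he hL True hd])
    next
      case False
      then have ae: "a + e + 1 = 4*m" using F by linarith
      have "(\<lambda>i. m+i) ` H \<subseteq> MF"
      proof
        fix q assume "q \<in> (\<lambda>i. m+i) ` H"
        then obtain i where i: "i < m" "x ! i \<noteq> y ! i" "q = m+i" unfolding H_def by auto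
        have "f q = x ! i" using i lxm lym unfolding f_def s_eq by (simp add: nth_append len_nu)
        moreover have "a+e-q = 2*m + (m-1-i)" using ae i by linarith
        moreover have "f (2*m + (m-1-i)) = y ! i"
        proof -
          have idx: "2*m + (m-1-i) = length (rev (nu_prefix m)) + (length x + (m-1-i))"
            using lxm len_nu[of m] by simp
          have "m-1-i < m" using i by linarith
          have "f (2*m + (m-1-i)) = (rev y @ nu_prefix m) ! (m-1-i)" unfolding f_def s_eq idx
            by (simp only: nth_append_length_plus)
          also have "\<dots> = rev y ! (m-1-i)" using \<open>m-1-i < m\<close> lym by (simp add: nth_append)
          also have "\<dots> = y ! i" using i lym by (simp add: rev_nth)
          finally show ?thesis .
        qed
        moreover have "a \<le> q" "q \<le> e" using ae hL i he by linarith+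
        ultimately show "q \<in> MF" using i unfolding MF_def by auto
      qed
      moreover have "finite MF" unfolding MF_def by (rule finite_subset[of _ "{..e}"]) auto
      ultimately have "card ((\<lambda>i. m+i) ` H) \<le> card MF" by (intro card_mono) auto
      moreover have "card ((\<lambda>i. m+i) ` H) = card H" by (rule card_image) simp
      ultimately show ?thesis using cH by linarith
    qed
  qed
  then show False using cMF by linarith
qed


theorem lemma7p2:
  fixes d :: "nat \<Rightarrow> nat"
  assumes "\<forall>n. d n \<ge> 1"
    and "(\<lambda>n. real (d n)) \<in> o(\<lambda>n. sqrt (real n))"
  shows "\<forall>\<^sub>F n in sequentially. 4 dvd n \<longrightarrow>
           (\<forall>x y T. length x = n div 4 \<longrightarrow> length y = n div 4 \<longrightarrow>
              count_list x True = d n \<longrightarrow> HAM x y = d n + 1 \<longrightarrow>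
              sublist T (s_str n x y) \<longrightarrow> near_pal (d n) T \<longrightarrow>
              length T \<le> 200 * (d n)^2 + n div 2)"
proof (rule always_eventually, intro allI impI)
  fix n x y T
  assume "4 dvd n" "length x = n div 4" "length y = n div 4" "count_list x True = d n"
    "HAM x y = d n + 1" "sublist T (s_str n x y)" "near_pal (d n) T"
  then show "length T \<le> 200 * (d n)^2 + n div 2"
    using fixed_n[of "d n" n x y T] assms(1) by blast
qed

end
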